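(* Let $q\ge 2$, $r\ge 2$ and $t,s\ge 0$ be integers. Then $$\max_{\substack{\mathbf{x}_1,\mathbf{x}_2\in J_r^*\\ \mathbf{x}_1\neq \mathbf{x}_2}} \bigl|\mathcal{B}_{t,s}(\mathbf{x}_1)\cap \mathcal{B}_{t,s}(\mathbf{x}_2)\bigr| \;+\;1 \;=\; M,\qquad\text{where}\quad M=\sum_{i=1}^{t} A_{t-i,s}(r-1)+\sum_{i=1}^{s} A_{t,s-i}(r-1)+1 .$$ Equivalently, $M$ is the minimum number $N$ such that any $N$ distinct sequences lying in $\mathcal{B}_{t,s}(\mathbf{x})$ for some $\mathbf{x}\in J_r^*$ determine $\mathbf{x}$ uniquely, i.e. $M$ is the minimum number of distinct outputs of the $(t,s)$-sticky-insdel channel required to uniquely reconstruct the transmitted sequence.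
   Context: Let $\Sigma_q=\{0,1,\dots,q-1\}$ and $\Sigma_q^*$ the set of finite strings over $\Sigma_q$. Every $\mathbf{x}\in\Sigma_q^*$ can be written uniquely as $\mathbf{x}=c_1^{u_1}c_2^{u_2}\cdots c_r^{u_r}$ with $c_i\neq c_{i+1}$ and $u_i\ge 1$ (runs); $r$ is the number of runs and $J_r^*$ is the set of strings with exactly $r$ runs. Write $\Psi(\mathbf{x})=(\mathbf{c},\mathbf{u})$ with $\mathbf{c}=c_1\cdots c_r$, $\mathbf{u}=(u_1,\dots,u_r)\in\mathbb{Z}_+^r$; $\Psi$ is a bijection from $J_r^*$ onto pairs of such $\mathbf{c}$ and $\mathbf{u}\in\mathbb{Z}_+^r$. A sticky insertion duplicates a symbol within its run (increases one run length by one); a sticky deletion deletes a symbol from a run of length at least 2. The sticky-insdel ball $\mathcal{B}_{t,s}(\mathbf{x})$ is the set of sequences obtainable from $\mathbf{x}$ by at most $t$ sticky insertions and at most $s$ sticky deletions; equivalently, if $\Psi(\mathbf{x})=(\mathbf{c},\mathbf{u})$, then $\mathbf{y}\in\mathcal{B}_{t,s}(\mathbf{x})$ iff $\Psi(\mathbf{y})=(\mathbf{c},\mathbf{v})$ with $\mathbf{v}\in\mathbb{Z}_+^r$, $\sum_{i=1}^r\max\{0,u_i-v_i\}\le s$ and $\sum_{i=1}^r\max\{0,v_i-u_i\}\le t$. The numbers $A_{t,s}(r)$ (for integers $t,s$ and $r\ge1$) are defined by: $A_{t,s}(r)=0$ if $t<0$ or $s<0$; $A_{t,s}(1)=t+s+1$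 for $t,s\ge0$; and for $r\ge 2$, $t,s\ge 0$: $A_{t,s}(r)=\sum_{i=1}^{t}A_{t-i,s}(r-1)+\sum_{i=1}^{s}A_{t,s-i}(r-1)+A_{t,s}(r-1)$. *)

theory Defs
  imports Main
begin

fun runs :: "nat list \<Rightarrow> (nat \<times> nat) list" where
  "runs [] = []"
| "runs (a # xs) =
     (case runs xs of
        [] \<Rightarrow> [(a, 1)]
      | (b, n) # rs \<Rightarrow> (if a = b then (a, Suc n) # rs else (a, 1) # (b, n) # rs))"

definition Psi :: "nat list \<Rightarrow> nat list \<times> nat list" where
  "Psi x = (map fst (runs x), map snd (runs x))"

definition Sigma_star :: "nat \<Rightarrow> nat list set" where
  "Sigma_star q = {x. set x \<subseteq> {..<q}}"

definition J_star :: "nat \<Rightarrow> nat \<Rightarrow> nat list set" where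
  "J_star q r = {x \<in> Sigma_star q. length (runs x) = r}"

text \<open>Sticky-insdel ball, via the run-length characterization:
  same run symbols, total decrease of run lengths at most s,
  total increase at most t (nat subtraction = max 0 (_ - _)).\<close>
definition sticky_ball :: "nat \<Rightarrow> nat \<Rightarrow> nat list \<Rightarrow> nat list set" where
  "sticky_ball t s x = {y. fst (Psi y) = fst (Psi x) \<and>
      (\<Sum>i<length (runs x). snd (Psi x) ! i - snd (Psi y) ! i) \<le> s \<and>
      (\<Sum>i<length (runs x). snd (Psi y) ! i - snd (Psi x) ! i) \<le> t}"

text \<open>A_{t,s}(r) for t,s >= 0 and r >= 1 (the value at r = 0 is irrelevant).
  Negative indices never occur in the recursion as written with i ranging
  over 1..t resp. 1..s.\<close>
fun A :: "nat \<Rightarrow> nat \<Rightarrow> nat \<Rightarrow> nat" where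
  "A t s 0 = 0"
| "A t s (Suc 0) = t + s + 1"
| "A t s (Suc (Suc r)) =
     (\<Sum>i=1..t. A (t - i) s (Suc r)) + (\<Sum>i=1..s. A t (s - i) (Suc r)) + A t s (Suc r)"

end

theory Submission
  imports Defs
begin


definition decode :: "(nat \<times> nat) list \<Rightarrow> nat list" where
  "decode rs = concat (map (\<lambda>(a,n). replicate n a) rs)"

lemma runs_Nil_iff: "runs x = [] \<longleftrightarrow> x = []"
  by (cases x) (auto split: list.splits prod.splits)

lemma runs_pos: "p \<in> set (runs x) \<Longrightarrow> snd p > 0"
  by (induction x arbitrary: p) (auto split: list.splits prod.splits if_splits)

lemma decode_runs: "decode (runs x) = x"
proof (induction x)
  case Nil then show ?case by (simp add: decode_def)
next
  case (Cons a xs)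
  show ?case
  proof (cases "runs xs")
    case Nil
    then show ?thesis using runs_Nil_iff by (simp add: decode_def)
  next
    case (Cons p rs)
    obtain b n where p: "p = (b,n)" by (cases p)
    show ?thesis using Cons.IH Cons p by (auto simp: decode_def)
  qed
qed

lemma runs_inj: "runs x = runs y \<Longrightarrow> x = y"
  by (metis decode_runs)

lemma runs_rep_app:
  assumes "runs ys = [] \<or> fst (hd (runs ys)) \<noteq> a"
  shows "runs (replicate (Suc k) a @ ys) = (a, Suc k) # runs ys"
  using assms
proof (induction k)
  case 0
  then show ?case by (auto split: list.splits prod.splits)
next
  case (Suc k)
  then show ?case by simp
qed

definition altok :: "(nat \<times> nat) list \<Rightarrow> bool" where
  "altok rs = ((\<forall>p\<in>set rs. snd p > 0) \<and> (\<forall>i. Suc i < length rs \<longrightarrow> fst (rs!i) \<noteq> fst (rs!Suc i)))"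

lemma runs_decode: "altok rs \<Longrightarrow> runs (decode rs) = rs"
proof (induction rs)
  case Nil then show ?case by (simp add: decode_def)
next
  case (Cons p rs)
  obtain a n where p: "p = (a,n)" by (cases p)
  have n: "n > 0" using Cons.prems p by (auto simp: altok_def)
  then obtain k where k: "n = Suc k" using not0_implies_Suc by blast
  have ok: "altok rs" using Cons.prems unfolding altok_def
    by auto
  have IH: "runs (decode rs) = rs" using Cons.IH ok by simp
  have hd: "rs = [] \<or> fst (hd rs) \<noteq> a"
  proof (cases rs)
    case (Cons q qs)
    have "fst ((p#rs)!0) \<noteq> fst ((p#rs)!Suc 0)" using Cons.prems Cons unfolding altok_def by auto
    then show ?thesis using Cons p by simp
  qed simp
  have "decode (p # rs) = replicate (Suc k) a @ decode rs" using p k by (simp add: decode_def)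
  then show ?case using runs_rep_app[of "decode rs" a k] IH hd p k by simp
qed

lemma set_decode: "set (decode rs) \<subseteq> fst ` set rs"
  by (auto simp: decode_def split: prod.splits) (metis fst_conv image_eqI)



definition pp :: "int list \<Rightarrow> int" where "pp d = sum_list (map (\<lambda>x. max 0 x) d)"
definition nn :: "int list \<Rightarrow> int" where "nn d = sum_list (map (\<lambda>x. max 0 (- x)) d)"
definition DD :: "nat \<Rightarrow> nat \<Rightarrow> nat \<Rightarrow> int list set" where
  "DD r t s = {d. length d = r \<and> pp d \<le> int t \<and> nn d \<le> int s}"

lemma pp_Cons[simp]: "pp (x # d) = max 0 x + pp d" by (simp add: pp_def)
lemma nn_Cons[simp]: "nn (x # d) = max 0 (-x) + nn d" by (simp add: nn_def)
lemma pp_Nil[simp]: "pp [] = 0" by (simp add: pp_def)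
lemma nn_Nil[simp]: "nn [] = 0" by (simp add: nn_def)
lemma pp_ge0: "pp d \<ge> 0" by (induction d) auto
lemma nn_ge0: "nn d \<ge> 0" by (induction d) auto
lemma pp_app[simp]: "pp (a @ b) = pp a + pp b" by (simp add: pp_def)
lemma nn_app[simp]: "nn (a @ b) = nn a + nn b" by (simp add: nn_def)
lemma pp_nth: "pp d = (\<Sum>i<length d. max 0 (d!i))"
  by (simp add: pp_def sum_list_sum_nth atLeast0LessThan)
lemma nn_nth: "nn d = (\<Sum>i<length d. max 0 (-(d!i)))"
  by (simp add: nn_def sum_list_sum_nth atLeast0LessThan)

lemma nn_elem: "i < length d \<Longrightarrow> - (d!i) \<le> nn d"
proof -
  assume i: "i < length d"
  have "max 0 (-(d!i)) \<le> (\<Sum>j<length d. max 0 (-(d!j)))"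
    by (rule member_le_sum[where f="\<lambda>j. max 0 (-(d!j))"]) (use i in auto)
  then show ?thesis by (simp add: nn_nth)
qed

lemma DD_finite: "finite (DD r t s)"
proof (rule finite_subset)
  show "DD r t s \<subseteq> {xs. set xs \<subseteq> {-int s..int t} \<and> length xs = r}"
  proof
    fix d assume d: "d \<in> DD r t s"
    have "set d \<subseteq> {-int s..int t}"
    proof
      fix x assume x: "x \<in> set d"
      then obtain i where i: "i < length d" "d!i = x" by (auto simp: in_set_conv_nth)
      have "max 0 (d!i) \<le> (\<Sum>j<length d. max 0 (d!j))"
        by (rule member_le_sum[where f="\<lambda>j. max 0 (d!j)"]) (use i in auto)
      then have "x \<le> pp d" using i by (simp add: pp_nth)
      moreover have "-x \<le> nn d" using nn_elem i by auto
      ultimately show "x \<in> {-int s..int t}" using d by (auto simp: DD_def)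
    qed
    then show "d \<in> {xs. set xs \<subseteq> {-int s..int t} \<and> length xs = r}" using d by (auto simp: DD_def)
  qed
qed (rule finite_lists_length_eq, simp)

lemma DD_0: "DD 0 t s = {[]}" by (auto simp: DD_def)

lemma DD_Suc: "DD (Suc r) t s =
   (\<Union>i\<in>{1..t}. (#) (int i) ` DD r (t-i) s) \<union> (\<Union>i\<in>{1..s}. (#) (- int i) ` DD r t (s-i))
   \<union> (#) 0 ` DD r t s" (is "?L = ?A \<union> ?B \<union> ?C")
proof
  show "?L \<subseteq> ?A \<union> ?B \<union> ?C"
  proof
    fix d assume d: "d \<in> ?L"
    then obtain x d' where dx: "d = x # d'" by (cases d) (auto simp: DD_def)
    have l: "length d' = r" "max 0 x + pp d' \<le> int t" "max 0 (-x) + nn d' \<le> int s"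
      using d dx by (auto simp: DD_def)
    consider "x > 0" | "x < 0" | "x = 0" by linarith
    then show "d \<in> ?A \<union> ?B \<union> ?C"
    proof cases
      case 1
      have "nat x \<in> {1..t}" using 1 l pp_ge0[of d'] by auto
      moreover have "d' \<in> DD r (t - nat x) s" using 1 l by (auto simp: DD_def)
      ultimately have "d \<in> ?A" using dx 1 by (auto intro!: bexI[of _ "nat x"])
      then show ?thesis by blast
    next
      case 2
      have "nat (-x) \<in> {1..s}" using 2 l nn_ge0[of d'] by auto
      moreover have "d' \<in> DD r t (s - nat (-x))" using 2 l by (auto simp: DD_def)
      ultimately have "d \<in> ?B" using dx 2 by (auto intro!: bexI[of _ "nat (-x)"])
      then show ?thesis by blast
    next
      case 3
      then show ?thesis using l dx by (auto simp: DD_def)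
    qed
  qed
  show "?A \<union> ?B \<union> ?C \<subseteq> ?L"
    by (auto simp: DD_def)
qed

lemma card_DD_Suc: "card (DD (Suc r) t s) =
   (\<Sum>i=1..t. card (DD r (t-i) s)) + (\<Sum>i=1..s. card (DD r t (s-i))) + card (DD r t s)"
proof -
  let ?A = "(\<Union>i\<in>{1..t}. (#) (int i) ` DD r (t-i) s)"
  let ?B = "(\<Union>i\<in>{1..s}. (#) (- int i) ` DD r t (s-i))"
  let ?C = "(#) 0 ` DD r t s"
  have fA: "finite ?A" "finite ?B" "finite ?C" using DD_finite by auto
  have cA: "card ?A = (\<Sum>i=1..t. card (DD r (t-i) s))"
    by (subst card_UN_disjoint) (auto simp: DD_finite card_image)
  have cB: "card ?B = (\<Sum>i=1..s. card (DD r t (s-i)))"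
    by (subst card_UN_disjoint) (auto simp: DD_finite card_image)
  have cC: "card ?C = card (DD r t s)" by (simp add: card_image)
  have "card (?A \<union> ?B \<union> ?C) = card ?A + card ?B + card ?C"
    using fA by (subst card_Un_disjoint, auto)+
  then show ?thesis using DD_Suc cA cB cC by simp
qed

lemma card_DD_A: "card (DD (Suc r) t s) = A t s (Suc r)"
proof (induction r arbitrary: t s)
  case 0
  then show ?case by (simp add: card_DD_Suc DD_0)
next
  case (Suc r)
  show ?case by (subst card_DD_Suc) (simp add: Suc.IH)
qed



definition ladd :: "int list \<Rightarrow> int list \<Rightarrow> int list" where
  "ladd a b = map2 (+) a b"

lemma map2_rep0: "length d = n \<Longrightarrow> map2 (+) d (replicate n (0::int)) = d"
  by (induction d arbitrary: n) auto

lemma upper: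
  assumes w: "length w = r" "\<exists>k<r. w!k \<noteq> 0"
  shows "card {d \<in> DD r t s. ladd d w \<in> DD r t s} + card (DD (r-1) t s) \<le> card (DD r t s)"
proof -
  obtain k where k: "k < r" "w!k \<noteq> 0" using w by auto
  let ?D = "DD r t s"
  let ?G = "{d \<in> ?D. ladd d w \<in> ?D}"
  define ins where "ins e = take k e @ 0 # drop k e" for e :: "int list"
  define line where "line e m = map2 (\<lambda>a b. a + int m * b) (ins e) w" for e m
  have ins_len: "length (ins e) = r" if "e \<in> DD (r-1) t s" for e
    using that k by (auto simp: ins_def DD_def)
  have ins_k: "ins e ! k = 0" if "e \<in> DD (r-1) t s" for e
    using that k by (auto simp: ins_def DD_def nth_append)
  have ins_D: "ins e \<in> ?D" if "e \<in> DD (r-1) t s" for e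
  proof -
    have "pp (ins e) = pp e" "nn (ins e) = nn e"
      unfolding ins_def by (metis append_take_drop_id pp_app pp_Cons nn_app nn_Cons max.idem add_0 minus_zero)+
    then show ?thesis using that ins_len by (auto simp: DD_def)
  qed
  have line_len: "length (line e m) = r" if "e \<in> DD (r-1) t s" for e m
    using ins_len[OF that] w by (simp add: line_def)
  have line_nth: "line e m ! i = ins e ! i + int m * w!i" if "e \<in> DD (r-1) t s" "i < r" for e m i
    using ins_len[OF that(1)] w that(2) by (simp add: line_def)
  have line0: "line e 0 = ins e" if "e \<in> DD (r-1) t s" for e
    by (rule nth_equalityI) (simp_all add: line_len[OF that] ins_len[OF that] line_nth[OF that])
  have line_suc: "ladd (line e m) w = line e (Suc m)" if "e \<in> DD (r-1) t s" for e m
    by (rule nth_equalityI) (simp_all add: ladd_def line_len[OF that] line_nth[OF that] w algebra_simps)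
  have line_inj: "inj (line e)" if "e \<in> DD (r-1) t s" for e
  proof
    fix m m' assume "line e m = line e m'"
    then have "line e m ! k = line e m' ! k" by simp
    then have "int m * w!k = int m' * w!k" using line_nth[OF that k(1)] by simp
    then show "m = m'" using k(2) by simp
  qed
  define M where "M e = Max (line e -` ?D)" for e
  define f where "f e = line e (M e)" for e
  have fin: "finite (line e -` ?D)" if "e \<in> DD (r-1) t s" for e
    by (rule finite_vimageI[OF DD_finite line_inj[OF that]])
  have ne: "0 \<in> line e -` ?D" if "e \<in> DD (r-1) t s" for e
    using line0[OF that] ins_D[OF that] by simp
  have f_in: "f e \<in> ?D - ?G" if "e \<in> DD (r-1) t s" for e
  proof -
    have "M e \<in> line e -` ?D" unfolding M_def using fin[OF that] ne[OF that] by (intro Max_in) auto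
    moreover have "Suc (M e) \<notin> line e -` ?D"
      using Max_ge[OF fin[OF that], of "Suc (M e)"] unfolding M_def by auto
    ultimately show ?thesis unfolding f_def using line_suc[OF that] by auto
  qed
  have f_inj: "inj_on f (DD (r-1) t s)"
  proof
    fix e e' assume e: "e \<in> DD (r-1) t s" and e': "e' \<in> DD (r-1) t s" and eq: "f e = f e'"
    have "f e ! k = f e' ! k" using eq by simp
    then have "int (M e) * w!k = int (M e') * w!k"
      unfolding f_def using line_nth[OF e k(1)] line_nth[OF e' k(1)] ins_k[OF e] ins_k[OF e'] by simp
    then have Meq: "M e = M e'" using k(2) by simp
    have "ins e = ins e'"
    proof (rule nth_equalityI)
      show "length (ins e) = length (ins e')" using ins_len[OF e] ins_len[OF e'] by simp
      fix i assume "i < length (ins e)"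
      then have i: "i < r" using ins_len[OF e] by simp
      have "f e ! i = f e' ! i" using eq by simp
      then show "ins e ! i = ins e' ! i"
        unfolding f_def using line_nth[OF e i] line_nth[OF e' i] Meq by simp
    qed
    moreover have "length e = r - 1" "length e' = r - 1" using e e' by (auto simp: DD_def)
    ultimately show "e = e'" using k unfolding ins_def
      by (metis append_eq_append_conv append_take_drop_id length_take list.inject min.absorb2 le_diff_conv2
          Suc_leI le_add_diff_inverse2 add.commute plus_1_eq_Suc less_imp_le_nat diff_Suc_1
          not_less_eq_eq Suc_pred gr_implies_not0 not_gr0)
  qed
  have "card (DD (r-1) t s) = card (f ` DD (r-1) t s)" using f_inj by (simp add: card_image)
  also have "\<dots> \<le> card (?D - ?G)" using f_in by (intro card_mono) (auto simp: DD_finite)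
  also have "\<dots> = card ?D - card ?G" by (rule card_Diff_subset) (auto intro: finite_subset[OF _ DD_finite])
  finally have "card (DD (r-1) t s) \<le> card ?D - card ?G" .
  moreover have "card ?G \<le> card ?D" by (rule card_mono[OF DD_finite]) auto
  ultimately show ?thesis by linarith
qed

lemma lower:
  assumes r: "r \<ge> 1"
  shows "card (DD r t s) \<le> card {d \<in> DD r t s. ladd d (1 # replicate (r-1) 0) \<in> DD r t s} + card (DD (r-1) t s)"
proof -
  let ?D = "DD r t s"
  let ?e = "1 # replicate (r-1) (0::int)"
  let ?G = "{d \<in> ?D. ladd d ?e \<in> ?D}"
  have bad: "tl ` (?D - ?G) \<subseteq> DD (r-1) t s" "inj_on tl (?D - ?G)"
  proof -
    have key: "length d' = r - 1 \<and> pp d' \<le> int t \<and> nn d' \<le> int s \<and> x = int t - pp d'"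
      if "x # d' \<in> ?D - ?G" for x d'
    proof -
      have a: "length d' = r - 1" "max 0 x + pp d' \<le> int t" "max 0 (-x) + nn d' \<le> int s"
        using that by (auto simp: DD_def)
      have "ladd (x # d') ?e = (x+1) # d'"
        using a(1) by (simp add: ladd_def map2_rep0)
      then have "\<not> (max 0 (x+1) + pp d' \<le> int t \<and> max 0 (-(x+1)) + nn d' \<le> int s)"
        using that a(1) by (auto simp: DD_def)
      moreover have "max 0 (-(x+1)) \<le> max 0 (-x)" by simp
      ultimately have b: "\<not> max 0 (x+1) + pp d' \<le> int t" using a(3) by linarith
      have "x \<ge> 0"
      proof (rule ccontr)
        assume "\<not> x \<ge> 0" then have "max 0 (x+1) = 0" by simp
        moreover have "max 0 x \<ge> 0" by simp
        ultimately show False using b a(2) by linarith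
      qed
      then have "max 0 (x+1) = x + 1" "max 0 x = x" by simp_all
      then show ?thesis using a b nn_ge0[of d'] by linarith
    qed
    show "tl ` (?D - ?G) \<subseteq> DD (r-1) t s"
    proof
      fix y assume "y \<in> tl ` (?D - ?G)"
      then obtain d where d: "d \<in> ?D - ?G" "y = tl d" by auto
      then obtain x d' where "d = x # d'" using r by (cases d) (auto simp: DD_def)
      then show "y \<in> DD (r-1) t s" using key[of x d'] d by (auto simp: DD_def)
    qed
    show "inj_on tl (?D - ?G)"
    proof
      fix d1 d2 assume d1: "d1 \<in> ?D - ?G" and d2: "d2 \<in> ?D - ?G" and eq: "tl d1 = tl d2"
      obtain x1 y1 where 1: "d1 = x1 # y1" using d1 r by (cases d1) (auto simp: DD_def)
      obtain x2 y2 where 2: "d2 = x2 # y2" using d2 r by (cases d2) (auto simp: DD_def)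
      have "y1 = y2" using 1 2 eq by simp
      moreover have "x1 = int t - pp y1" using key[of x1 y1] d1 1 by blast
      moreover have "x2 = int t - pp y2" using key[of x2 y2] d2 2 by blast
      ultimately show "d1 = d2" using 1 2 by simp
    qed
  qed
  have "card (?D - ?G) \<le> card (DD (r-1) t s)"
    using card_inj_on_le[OF bad(2) bad(1) DD_finite] .
  moreover have "card (?D - ?G) = card ?D - card ?G" by (rule card_Diff_subset) (auto intro: finite_subset[OF _ DD_finite])
  ultimately show ?thesis by linarith
qed



definition dif :: "nat list \<Rightarrow> nat list \<Rightarrow> int list" where
  "dif v u = map2 (\<lambda>a b. int a - int b) v u"

lemma dif_len[simp]: "length (dif v u) = min (length v) (length u)" by (simp add: dif_def)
lemma dif_nth[simp]: "i < length v \<Longrightarrow> i < length u \<Longrightarrow> dif v u ! i = int (v!i) - int (u!i)"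
  by (simp add: dif_def)

lemma pp_dif: "length v = length u \<Longrightarrow> pp (dif v u) = int (\<Sum>i<length u. v!i - u!i)"
  unfolding pp_nth of_nat_sum by (intro sum.cong) (auto simp: max_def of_nat_diff)
lemma nn_dif: "length v = length u \<Longrightarrow> nn (dif v u) = int (\<Sum>i<length u. u!i - v!i)"
  unfolding nn_nth of_nat_sum by (intro sum.cong) (auto simp: max_def of_nat_diff)

lemma ball_iff: "y \<in> sticky_ball t s x \<longleftrightarrow> map fst (runs y) = map fst (runs x) \<and>
   pp (dif (map snd (runs y)) (map snd (runs x))) \<le> int t \<and> nn (dif (map snd (runs y)) (map snd (runs x))) \<le> int s"
proof (cases "map fst (runs y) = map fst (runs x)")
  case True
  then have l: "length (runs y) = length (runs x)" by (metis length_map)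
  show ?thesis using True l
    by (simp add: sticky_ball_def Psi_def pp_dif nn_dif del: of_nat_sum) blast
qed (simp add: sticky_ball_def Psi_def)

lemma runs_eq_from: "map fst (runs y) = map fst (runs y') \<Longrightarrow> map snd (runs y) = map snd (runs y') \<Longrightarrow> y = y'"
  by (metis runs_inj zip_map_fst_snd)

lemma upper_ball:
  assumes x: "x1 \<in> J_star q r" "x2 \<in> J_star q r" "x1 \<noteq> x2"
  shows "finite (sticky_ball t s x1 \<inter> sticky_ball t s x2) \<and>
         card (sticky_ball t s x1 \<inter> sticky_ball t s x2) \<le> card (DD r t s) - card (DD (r-1) t s)"
proof (cases "map fst (runs x1) = map fst (runs x2)")
  case False
  then have "sticky_ball t s x1 \<inter> sticky_ball t s x2 = {}" by (auto simp: ball_iff)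
  then show ?thesis by simp
next
  case True
  let ?I = "sticky_ball t s x1 \<inter> sticky_ball t s x2"
  define u1 where "u1 = map snd (runs x1)"
  define u2 where "u2 = map snd (runs x2)"
  have lr: "length u1 = r" "length u2 = r" using x by (auto simp: u1_def u2_def J_star_def)
  define w where "w = dif u1 u2"
  define g where "g y = dif (map snd (runs y)) u1" for y
  have yl: "length (runs y) = r" if "y \<in> ?I" for y
  proof -
    have "map fst (runs y) = map fst (runs x1)" using that by (simp add: ball_iff)
    then have "length (runs y) = length (runs x1)" by (metis length_map)
    then show ?thesis using lr by (simp add: u1_def)
  qed
  have g_inj: "inj_on g ?I"
  proof
    fix y y' assume y: "y \<in> ?I" and y': "y' \<in> ?I" and eq: "g y = g y'"
    have "map snd (runs y) = map snd (runs y')"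
    proof (rule nth_equalityI)
      show "length (map snd (runs y)) = length (map snd (runs y'))" using yl y y' by simp
      fix i assume "i < length (map snd (runs y))"
      then have i: "i < r" using yl y by simp
      have "g y ! i = g y' ! i" using eq by simp
      then show "map snd (runs y) ! i = map snd (runs y') ! i"
        using i yl[OF y] yl[OF y'] lr unfolding g_def by simp
    qed
    moreover have "map fst (runs y) = map fst (runs y')" using y y' by (auto simp: ball_iff)
    ultimately show "y = y'" by (metis runs_eq_from)
  qed
  have wnz: "\<exists>k<r. w!k \<noteq> 0"
  proof (rule ccontr)
    assume "\<not> (\<exists>k<r. w!k \<noteq> 0)"
    then have z: "\<And>k. k < r \<Longrightarrow> w!k = 0" by blast
    have "u1 = u2"
    proof (rule nth_equalityI)
      show "length u1 = length u2" using lr by simp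
      fix i assume "i < length u1"
      then have i: "i < r" using lr by simp
      have "w!i = int (u1!i) - int (u2!i)" unfolding w_def using i lr by simp
      then show "u1!i = u2!i" using z[OF i] by simp
    qed
    then have "map snd (runs x1) = map snd (runs x2)" unfolding u1_def u2_def .
    then have "x1 = x2" using True runs_eq_from by blast
    then show False using x by simp
  qed
  have gI: "g ` ?I \<subseteq> {d \<in> DD r t s. ladd d w \<in> DD r t s}"
  proof
    fix d assume "d \<in> g ` ?I"
    then obtain y where y: "y \<in> ?I" "d = g y" by auto
    have "ladd (g y) w = dif (map snd (runs y)) u2"
      using yl[OF y(1)] lr by (intro nth_equalityI) (auto simp: g_def w_def ladd_def)
    have y1: "y \<in> sticky_ball t s x1" and y2: "y \<in> sticky_ball t s x2" using y(1) by auto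
    have "g y \<in> DD r t s" using ball_iff[THEN iffD1, OF y1] yl[OF y(1)] lr
      unfolding DD_def g_def u1_def by simp
    moreover have "ladd (g y) w \<in> DD r t s" using ball_iff[THEN iffD1, OF y2] yl[OF y(1)] lr
      unfolding DD_def \<open>ladd (g y) w = dif (map snd (runs y)) u2\<close> u2_def by simp
    ultimately show "d \<in> {d \<in> DD r t s. ladd d w \<in> DD r t s}" using y by simp
  qed
  have fG: "finite {d \<in> DD r t s. ladd d w \<in> DD r t s}" by (rule finite_subset[OF _ DD_finite]) auto
  have finI: "finite ?I" using finite_imageD[OF finite_subset[OF gI fG] g_inj] .
  have "card ?I = card (g ` ?I)" using g_inj by (simp add: card_image)
  also have "\<dots> \<le> card {d \<in> DD r t s. ladd d w \<in> DD r t s}" by (rule card_mono[OF fG gI])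
  finally have c1: "card ?I \<le> card {d \<in> DD r t s. ladd d w \<in> DD r t s}" .
  have wl: "length w = r" using lr by (simp add: w_def)
  have "card {d \<in> DD r t s. ladd d w \<in> DD r t s} + card (DD (r-1) t s) \<le> card (DD r t s)"
    by (rule upper[OF wl wnz])
  then show ?thesis using finI c1 by linarith
qed



definition altc :: "nat \<Rightarrow> nat list" where "altc r = map (\<lambda>i. i mod 2) [0..<r]"

lemma altok_zip:
  assumes "length v = r" "\<forall>x\<in>set v. x > 0"
  shows "altok (zip (altc r) v)"
  unfolding altok_def
proof (intro conjI allI impI ballI)
  fix p assume "p \<in> set (zip (altc r) v)"
  then show "snd p > 0" using assms(2) by (metis prod.collapse set_zip_rightD)
next
  fix i assume "Suc i < length (zip (altc r) v)"
  then have "Suc i < r" using assms(1) by (simp add: altc_def)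
  then show "fst (zip (altc r) v ! i) \<noteq> fst (zip (altc r) v ! Suc i)"
    using assms(1) by (simp add: altc_def) presburger
qed

lemma mk_runs:
  assumes "length v = r" "\<forall>x\<in>set v. x > 0"
  shows "runs (decode (zip (altc r) v)) = zip (altc r) v"
  by (rule runs_decode[OF altok_zip[OF assms]])

lemma mk_J:
  assumes "length v = r" "\<forall>x\<in>set v. x > 0" "q \<ge> 2"
  shows "decode (zip (altc r) v) \<in> J_star q r"
proof -
  have "set (decode (zip (altc r) v)) \<subseteq> {..<q}"
  proof
    fix a assume "a \<in> set (decode (zip (altc r) v))"
    then have "a \<in> fst ` set (zip (altc r) v)" using set_decode by blast
    then have "a \<in> set (altc r)" by (auto dest: set_zip_leftD)
    then show "a \<in> {..<q}" using assms(3) by (auto simp: altc_def)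
  qed
  then show ?thesis using mk_runs[OF assms(1,2)] assms(1)
    by (simp add: J_star_def Sigma_star_def altc_def)
qed

lemma lower_ball:
  assumes q: "q \<ge> 2" and r: "r \<ge> 1"
  shows "\<exists>x1 x2. x1 \<in> J_star q r \<and> x2 \<in> J_star q r \<and> x1 \<noteq> x2 \<and>
     card (DD r t s) - card (DD (r-1) t s) \<le> card (sticky_ball t s x1 \<inter> sticky_ball t s x2)"
proof -
  define c where "c = altc r"
  have lc: "length c = r" by (simp add: c_def altc_def)
  define u1 where "u1 = (s+2) # replicate (r-1) (s+1)"
  define u2 where "u2 = replicate r (s+1)"
  have lu: "length u1 = r" "length u2 = r" using r by (auto simp: u1_def u2_def)
  have pu: "\<forall>x\<in>set u1. x > 0" "\<forall>x\<in>set u2. x > 0" by (auto simp: u1_def u2_def)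
  have u1ge: "u1 ! i \<ge> s + 1" if "i < r" for i
    using that by (cases i) (auto simp: u1_def)
  define x1 where "x1 = decode (zip c u1)"
  define x2 where "x2 = decode (zip c u2)"
  have rx1: "runs x1 = zip c u1" unfolding x1_def c_def by (rule mk_runs[OF lu(1) pu(1)])
  have rx2: "runs x2 = zip c u2" unfolding x2_def c_def by (rule mk_runs[OF lu(2) pu(2)])
  have J: "x1 \<in> J_star q r" "x2 \<in> J_star q r"
    unfolding x1_def x2_def c_def using mk_J lu pu q by auto
  have ne: "x1 \<noteq> x2"
  proof
    assume "x1 = x2"
    then have "map snd (runs x1) = map snd (runs x2)" by simp
    then have "u1 = u2" using rx1 rx2 lc lu by simp
    then show False using r by (cases r) (auto simp: u1_def u2_def)
  qed
  let ?e = "1 # replicate (r-1) (0::int)"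
  let ?G = "{d \<in> DD r t s. ladd d ?e \<in> DD r t s}"
  let ?I = "sticky_ball t s x1 \<inter> sticky_ball t s x2"
  define vv where "vv d = map2 (\<lambda>a b. nat (int a + b)) u1 d" for d
  define h where "h d = decode (zip c (vv d))" for d
  have props: "length (vv d) = r \<and> (\<forall>x\<in>set (vv d). x > 0) \<and> dif (vv d) u1 = d \<and> dif (vv d) u2 = ladd d ?e"
    if d: "d \<in> DD r t s" for d
  proof -
    have ld: "length d = r" using d by (simp add: DD_def)
    have dge: "d ! i \<ge> - int s" if "i < r" for i
      using nn_elem[of i d] that ld d by (auto simp: DD_def)
    have pos: "int (u1!i) + d!i \<ge> 1" if "i < r" for i using u1ge[OF that] dge[OF that] by linarith
    have vn: "vv d ! i = nat (int (u1!i) + d!i)" if "i < r" for i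
      using that ld lu by (simp add: vv_def)
    have lv: "length (vv d) = r" using ld lu by (simp add: vv_def)
    have "\<forall>x\<in>set (vv d). x > 0"
    proof
      fix x assume "x \<in> set (vv d)"
      then obtain i where "i < r" "x = vv d ! i" using lv by (auto simp: in_set_conv_nth)
      then show "x > 0" using vn pos by fastforce
    qed
    moreover have "dif (vv d) u1 = d"
    proof (rule nth_equalityI)
      show "length (dif (vv d) u1) = length d" using lv lu ld by simp
      fix i assume "i < length (dif (vv d) u1)"
      then have i: "i < r" using lv lu by simp
      have "int (vv d ! i) = int (u1!i) + d!i" using vn[OF i] pos[OF i] by simp
      then show "dif (vv d) u1 ! i = d ! i" using i lv lu by simp
    qed
    moreover have "dif (vv d) u2 = ladd d ?e"
    proof (rule nth_equalityI)
      show "length (dif (vv d) u2) = length (ladd d ?e)" using lv lu ld r by (simp add: ladd_def)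
      fix i assume "i < length (dif (vv d) u2)"
      then have i: "i < r" using lv lu by simp
      have "int (vv d ! i) = int (u1!i) + d!i" using vn[OF i] pos[OF i] by simp
      moreover have "int (u1!i) = int (u2!i) + (if i = 0 then 1 else 0)" using i
        by (cases i) (auto simp: u1_def u2_def)
      moreover have "ladd d ?e ! i = d!i + (if i = 0 then 1 else 0)" using i ld r
        by (cases i) (auto simp: ladd_def)
      ultimately show "dif (vv d) u2 ! i = ladd d ?e ! i" using i lv lu by simp
    qed
    ultimately show ?thesis using lv by blast
  qed
  have rh: "runs (h d) = zip c (vv d)" if "d \<in> DD r t s" for d
    unfolding h_def c_def using props[OF that] mk_runs by blast
  have hI: "h ` ?G \<subseteq> ?I"
  proof
    fix y assume "y \<in> h ` ?G"
    then obtain d where d: "d \<in> ?G" "y = h d" by auto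
    have dD: "d \<in> DD r t s" using d by simp
    have P: "length (vv d) = r" "dif (vv d) u1 = d" "dif (vv d) u2 = ladd d ?e" using props[OF dD] by auto
    have f: "map fst (runs y) = c" "map snd (runs y) = vv d" using rh[OF dD] d P lc by auto
    have "y \<in> sticky_ball t s x1" unfolding ball_iff using f rx1 lc lu P d(1)
      by (simp add: DD_def)
    moreover have "y \<in> sticky_ball t s x2" unfolding ball_iff using f rx2 lc lu P d(1)
      by (simp add: DD_def)
    ultimately show "y \<in> ?I" by simp
  qed
  have hinj: "inj_on h ?G"
  proof
    fix d d' assume d: "d \<in> ?G" and d': "d' \<in> ?G" and eq: "h d = h d'"
    have dD: "d \<in> DD r t s" "d' \<in> DD r t s" using d d' by auto
    have "zip c (vv d) = zip c (vv d')" using rh[OF dD(1)] rh[OF dD(2)] eq by metis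
    then have "map snd (zip c (vv d)) = map snd (zip c (vv d'))" by simp
    moreover have l: "length (vv d) = r" "length (vv d') = r" using props[OF dD(1)] props[OF dD(2)] by blast+
    ultimately have "vv d = vv d'" using lc by (metis map_snd_zip)
    moreover have "dif (vv d) u1 = d" "dif (vv d') u1 = d'" using props[OF dD(1)] props[OF dD(2)] by blast+
    ultimately show "d = d'" by metis
  qed
  have finI: "finite ?I" using upper_ball[OF J ne] by blast
  have "card ?G \<le> card ?I" by (rule card_inj_on_le[OF hinj hI finI])
  moreover have "card (DD r t s) \<le> card ?G + card (DD (r-1) t s)" by (rule lower[OF r])
  ultimately show ?thesis using J ne by (intro exI[of _ x1] exI[of _ x2]) auto
qed


theorem theorem1:
  fixes q r t s :: nat
  assumes "q \<ge> 2" and "r \<ge> 2"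
  shows "Max {card (sticky_ball t s x1 \<inter> sticky_ball t s x2) | x1 x2.
              x1 \<in> J_star q r \<and> x2 \<in> J_star q r \<and> x1 \<noteq> x2} + 1
         = (\<Sum>i=1..t. A (t - i) s (r - 1)) + (\<Sum>i=1..s. A t (s - i) (r - 1)) + 1"
proof -
  let ?S = "{card (sticky_ball t s x1 \<inter> sticky_ball t s x2) | x1 x2.
              x1 \<in> J_star q r \<and> x2 \<in> J_star q r \<and> x1 \<noteq> x2}"
  let ?K = "card (DD r t s) - card (DD (r-1) t s)"
  have r1: "r \<ge> 1" using assms by simp
  have ub: "\<forall>n\<in>?S. n \<le> ?K" using upper_ball by blast
  obtain x1 x2 where x: "x1 \<in> J_star q r" "x2 \<in> J_star q r" "x1 \<noteq> x2"
     and lb: "?K \<le> card (sticky_ball t s x1 \<inter> sticky_ball t s x2)"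
    using lower_ball[OF assms(1) r1] by blast
  have "card (sticky_ball t s x1 \<inter> sticky_ball t s x2) \<le> ?K" using upper_ball[OF x] by blast
  then have eqK: "card (sticky_ball t s x1 \<inter> sticky_ball t s x2) = ?K" using lb by simp
  have KS: "?K \<in> ?S"
    by (rule CollectI, rule exI[of _ x1], rule exI[of _ x2]) (use x eqK in simp)
  have finS: "finite ?S" by (rule finite_subset[of _ "{..?K}"]) (use ub in auto)
  have M: "Max ?S = ?K" by (rule Max_eqI[OF finS]) (use ub KS in auto)
  obtain r' where r': "r = Suc (Suc r')" using assms(2) by (metis add_2_eq_Suc le_Suc_ex)
  have "card (DD r t s) = (\<Sum>i=1..t. A (t - i) s (r - 1)) + (\<Sum>i=1..s. A t (s - i) (r - 1)) + A t s (r-1)"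
    using card_DD_A[of "Suc r'" t s] r' by simp
  moreover have "card (DD (r-1) t s) = A t s (r-1)" using card_DD_A[of r' t s] r' by simp
  ultimately show ?thesis using M by simp
qed

end
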